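(* Let $\mathbf X=(X_1,\dots,X_n)$ and $\mathbf Y=(Y_1,\dots,Y_m)$ be variables and let $\mathcal A$ be the unital complex algebra generated by $\mathbf X,\mathbf Y$ subject only to the relations $[X_i,Y_j]=0$ for all $i,j$ (i.e. $\mathbb C\langle\mathbf X,\mathbf Y\rangle$ modulo the two-sided ideal generated by these commutators). Define $\Theta_{(1,2)}:\mathcal A\otimes\mathcal A\to\mathcal A\otimes\mathcal A$ by $\Theta_{(1,2)}(Z_1\otimes Z_2)=Z_2\otimes Z_1$, and equip $\mathcal A\otimes\mathcal A$ with the multiplication $(Z_1\otimes Z_2)(W_1\otimes W_2)=Z_1W_1\otimes Z_2W_2$. For each $i$ let $\partial_{\ell,X_i}$ be the left bi-free difference quotient of $X_i$ with respect to $(\mathbb C\langle\hat{\mathbf X}_i\rangle,\mathbb C\langle\mathbf Y\rangle)$ and for each $j$ let $\partial_{r,Y_j}$ be the right bi-free difference quotient of $Y_j$ with respect to $(\mathbb C\langle\mathbf X\rangle,\mathbb C\langle\hat{\mathbf Y}_j\rangle)$. Then for every $P\in\mathcal A$, \[ \sum_{i=1}^n\Big(\partial_{\ell,X_i}(P)(X_i\otimes1)-(1\otimes X_i)\partial_{\ell,X_i}(P)\Big)-\Theta_{(1,2)}\Big(\sum_{j=1}^m\big(\partial_{r,Y_j}(P)(Y_j\otimes1)-(1\otimes Y_j)\partial_{r,Y_j}(P)\big)\Big)=P\otimes1-1\otimes P. \] In particular, if $P\in\mathcal A$ satisfies $\partial_{\ell,X_i}(P)=0$ and $\partial_{r,Y_j}(P)=0$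 for all $i,j$, then $P$ is a scalar multiple of $1$.
   Context: $\hat{\mathbf X}_i$ denotes $(X_1,\dots,X_{i-1},X_{i+1},\dots,X_n)$, similarly $\hat{\mathbf Y}_j$. Bi-free difference quotients: let $L$ ("left letters") and $R$ ("right letters") be sets of generators. For $X\in L$ and a word $Z_1\cdots Z_k$ with each $Z_p\in L\cup R$, $\partial_{\ell,X}(Z_1\cdots Z_k)=\sum_{q:\,Z_q=X}\Big(Z_1\cdots Z_{q-1}\prod_{p>q,\,Z_p\in R}Z_p\Big)\otimes\prod_{p>q,\,Z_p\in L}Z_p$, and for $Y\in R$, $\partial_{r,Y}(Z_1\cdots Z_k)=\sum_{q:\,Z_q=Y}\Big(Z_1\cdots Z_{q-1}\prod_{p>q,\,Z_p\in L}Z_p\Big)\otimes\prod_{p>q,\,Z_p\in R}Z_p$, where all products are taken in increasing order of index (empty product $=1$), extended linearly. "With respect to $(B_\ell,B_r)$" means the left letters are $X$ together with elements of $B_\ell$ (here the other $X$'s) and the right letters are elements of $B_r$ (here the $Y$'s), and analogously on the right. These maps are well defined on $\mathcal A$ since they respect commutation of left letters with right letters. *)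

theory Defs
  imports Complex_Main "HOL-Library.Poly_Mapping"
begin

text \<open>Letters: Inl i stands for X_i, Inr j for Y_j (0-based indices).
  Elements of the free algebra C<X,Y> are finitely supported complex
  combinations of words; elements of the algebraic tensor product of the
  free algebra with itself are finitely supported combinations of pairs of words.\<close>

type_synonym letter = "nat + nat"
type_synonym word = "letter list"
type_synonym fa = "word \<Rightarrow>\<^sub>0 complex"
type_synonym fa2 = "(word \<times> word) \<Rightarrow>\<^sub>0 complex"

definition letters :: "nat \<Rightarrow> nat \<Rightarrow> letter set" where
  "letters n m = Inl ` {..<n} \<union> Inr ` {..<m}"

definition alg :: "nat \<Rightarrow> nat \<Rightarrow> fa set" where
  "alg n m = {p. \<forall>w\<in>Poly_Mapping.keys p. set w \<subseteq> letters n m}"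

definition mono :: "word \<Rightarrow> fa" where
  "mono w = Poly_Mapping.single w 1"

definition one_fa :: fa where
  "one_fa = mono []"

definition Xv :: "nat \<Rightarrow> fa" where "Xv i = mono [Inl i]"
definition Yv :: "nat \<Rightarrow> fa" where "Yv j = mono [Inr j]"

definition scale :: "complex \<Rightarrow> ('a \<Rightarrow>\<^sub>0 complex) \<Rightarrow> ('a \<Rightarrow>\<^sub>0 complex)" where
  "scale c p = Poly_Mapping.map (\<lambda>x. c * x) p"

definition fmul :: "fa \<Rightarrow> fa \<Rightarrow> fa" where
  "fmul p q = (\<Sum>u\<in>Poly_Mapping.keys p. \<Sum>v\<in>Poly_Mapping.keys q.
       Poly_Mapping.single (u @ v) (Poly_Mapping.lookup p u * Poly_Mapping.lookup q v))"

definition tens :: "fa \<Rightarrow> fa \<Rightarrow> fa2" where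
  "tens p q = (\<Sum>u\<in>Poly_Mapping.keys p. \<Sum>v\<in>Poly_Mapping.keys q.
       Poly_Mapping.single (u, v) (Poly_Mapping.lookup p u * Poly_Mapping.lookup q v))"

definition mul2 :: "fa2 \<Rightarrow> fa2 \<Rightarrow> fa2" where
  "mul2 p q = (\<Sum>a\<in>Poly_Mapping.keys p. \<Sum>b\<in>Poly_Mapping.keys q.
       Poly_Mapping.single (fst a @ fst b, snd a @ snd b)
         (Poly_Mapping.lookup p a * Poly_Mapping.lookup q b))"

definition flip2 :: "fa2 \<Rightarrow> fa2" where
  "flip2 p = (\<Sum>a\<in>Poly_Mapping.keys p.
       Poly_Mapping.single (snd a, fst a) (Poly_Mapping.lookup p a))"

definition lin2 :: "(word \<Rightarrow> fa2) \<Rightarrow> fa \<Rightarrow> fa2" where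
  "lin2 f p = (\<Sum>w\<in>Poly_Mapping.keys p. scale (Poly_Mapping.lookup p w) (f w))"

text \<open>S is the predicate of letters on the same side as a.\<close>
definition dq_word :: "(letter \<Rightarrow> bool) \<Rightarrow> letter \<Rightarrow> word \<Rightarrow> fa2" where
  "dq_word S a w = (\<Sum>q\<in>{q. q < length w \<and> w ! q = a}.
      Poly_Mapping.single
        (take q w @ filter (\<lambda>z. \<not> S z) (drop (Suc q) w), filter S (drop (Suc q) w)) 1)"

definition dL :: "nat \<Rightarrow> fa \<Rightarrow> fa2" where
  "dL i = lin2 (dq_word isl (Inl i))"

definition dR :: "nat \<Rightarrow> fa \<Rightarrow> fa2" where
  "dR j = lin2 (dq_word (\<lambda>z. \<not> isl z) (Inr j))"

definition comm_gens :: "nat \<Rightarrow> nat \<Rightarrow> fa set" where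
  "comm_gens n m = {mono [Inl i, Inr j] - mono [Inr j, Inl i] | i j. i < n \<and> j < m}"

text \<open>Two-sided ideal of the free algebra generated by the commutators;
  A = alg n m / cideal n m.\<close>
inductive_set cideal :: "nat \<Rightarrow> nat \<Rightarrow> fa set" for n m where
  zero: "0 \<in> cideal n m"
| add: "p \<in> cideal n m \<Longrightarrow> q \<in> cideal n m \<Longrightarrow> p + q \<in> cideal n m"
| gen: "g \<in> comm_gens n m \<Longrightarrow> a \<in> alg n m \<Longrightarrow> b \<in> alg n m
          \<Longrightarrow> fmul (fmul a g) b \<in> cideal n m"

text \<open>Kernel of the quotient map alg \<otimes> alg \<rightarrow> A \<otimes> A, i.e. I \<otimes> alg + alg \<otimes> I.\<close>
inductive_set ker2 :: "nat \<Rightarrow> nat \<Rightarrow> fa2 set" for n m where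
  zero: "0 \<in> ker2 n m"
| add: "p \<in> ker2 n m \<Longrightarrow> q \<in> ker2 n m \<Longrightarrow> p + q \<in> ker2 n m"
| left: "a \<in> cideal n m \<Longrightarrow> b \<in> alg n m \<Longrightarrow> tens a b \<in> ker2 n m"
| right: "a \<in> alg n m \<Longrightarrow> b \<in> cideal n m \<Longrightarrow> tens a b \<in> ker2 n m"

end

theory Submission
  imports Defs
begin


lemma lookup_scale [simp]: "Poly_Mapping.lookup (scale c p) k = c * Poly_Mapping.lookup p k"
  unfolding scale_def by transfer (simp add: when_def)

lemma scale_eqI: "(\<And>k. Poly_Mapping.lookup p k = Poly_Mapping.lookup q k) \<Longrightarrow> p = q"
  by (rule poly_mapping_eqI)

lemma scale_add_r: "scale c (p + q) = scale c p + scale c q"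
  by (rule poly_mapping_eqI) (simp add: lookup_add algebra_simps)
lemma scale_add_l: "scale (c + d) p = scale c p + scale d p"
  by (rule poly_mapping_eqI) (simp add: lookup_add algebra_simps)
lemma scale_minus_r: "scale c (p - q) = scale c p - scale c q"
  by (rule poly_mapping_eqI) (simp add: lookup_minus algebra_simps)
lemma scale_uminus_r: "scale c (- q) = - scale c q"
  by (rule poly_mapping_eqI) (simp add: algebra_simps)
lemma scale_scale: "scale c (scale d p) = scale (c * d) p"
  by (rule poly_mapping_eqI) (simp add: algebra_simps)
lemma scale_1 [simp]: "scale 1 p = p"
  by (rule poly_mapping_eqI) simp
lemma scale_0 [simp]: "scale 0 p = 0"
  by (rule poly_mapping_eqI) simp
lemma scale_zero [simp]: "scale c 0 = 0"
  by (rule poly_mapping_eqI) simp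
lemma scale_m1: "scale (-1) p = - p"
  by (rule poly_mapping_eqI) simp
lemma scale_single: "scale c (Poly_Mapping.single k d) = Poly_Mapping.single k (c * d)"
  by (rule poly_mapping_eqI) (simp add: lookup_single when_def)
lemma scale_sum: "scale c (sum f I) = (\<Sum>i\<in>I. scale c (f i))"
  by (rule poly_mapping_eqI) (simp add: lookup_sum sum_distrib_left)
lemma keys_scale: "Poly_Mapping.keys (scale c p) \<subseteq> Poly_Mapping.keys p"
  by (auto simp: in_keys_iff)

definition lin :: "('a \<Rightarrow> ('b \<Rightarrow>\<^sub>0 complex)) \<Rightarrow> ('a \<Rightarrow>\<^sub>0 complex) \<Rightarrow> ('b \<Rightarrow>\<^sub>0 complex)" where
  "lin g p = (\<Sum>a\<in>Poly_Mapping.keys p. scale (Poly_Mapping.lookup p a) (g a))"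

lemma lin_superset:
  assumes "finite S" "Poly_Mapping.keys p \<subseteq> S"
  shows "lin g p = (\<Sum>a\<in>S. scale (Poly_Mapping.lookup p a) (g a))"
  unfolding lin_def
  by (rule sum.mono_neutral_left) (use assms in \<open>auto simp: in_keys_iff\<close>)

lemma lin_add: "lin g (p + q) = lin g p + lin g q"
proof -
  let ?S = "Poly_Mapping.keys p \<union> Poly_Mapping.keys q"
  have "lin g (p + q) = (\<Sum>a\<in>?S. scale (Poly_Mapping.lookup (p+q) a) (g a))"
    using keys_add[of p q] by (intro lin_superset) auto
  also have "\<dots> = (\<Sum>a\<in>?S. scale (Poly_Mapping.lookup p a) (g a)) + (\<Sum>a\<in>?S. scale (Poly_Mapping.lookup q a) (g a))"
    by (simp add: lookup_add scale_add_l sum.distrib)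
  also have "\<dots> = lin g p + lin g q"
    by (subst (1 2) lin_superset[of ?S]) auto
  finally show ?thesis .
qed

lemma lin_zero [simp]: "lin g 0 = 0"
  by (simp add: lin_def)

lemma lin_scale: "lin g (scale c p) = scale c (lin g p)"
proof -
  have "lin g (scale c p) = (\<Sum>a\<in>Poly_Mapping.keys p. scale (Poly_Mapping.lookup (scale c p) a) (g a))"
    by (rule lin_superset) (auto simp: keys_scale[THEN subsetD])
  then show ?thesis by (simp add: lin_def scale_sum scale_scale)
qed

lemma lin_uminus: "lin g (- p) = - lin g p"
  using lin_scale[of g "-1" p] by (simp add: scale_m1)

lemma lin_minus: "lin g (p - q) = lin g p - lin g q"
  using lin_add[of g p "-q"] by (simp add: lin_uminus)

lemma lin_sum: "lin g (sum f I) = (\<Sum>i\<in>I. lin g (f i))"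
  by (induction I rule: infinite_finite_induct) (auto simp: lin_add)

lemma lin_single: "lin g (Poly_Mapping.single a c) = scale c (g a)"
  by (simp add: lin_def)

lemma lin_gadd: "lin (\<lambda>a. g a + h a) p = lin g p + lin h p"
  by (simp add: lin_def scale_add_r sum.distrib)

lemma lin_gminus: "lin (\<lambda>a. g a - h a) p = lin g p - lin h p"
  by (simp add: lin_def scale_minus_r sum_subtractf)

lemma lin_gscale: "lin (\<lambda>a. scale c (g a)) p = scale c (lin g p)"
  by (simp add: lin_def scale_sum scale_scale mult.commute)

lemma lin_gzero [simp]: "lin (\<lambda>a. 0) p = 0"
  by (simp add: lin_def)

lemma lin_gsum: "lin (\<lambda>a. \<Sum>i\<in>I. g i a) p = (\<Sum>i\<in>I. lin (g i) p)"
  by (induction I rule: infinite_finite_induct) (auto simp: lin_gadd)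

lemma lin_cong: "(\<And>a. a \<in> Poly_Mapping.keys p \<Longrightarrow> g a = h a) \<Longrightarrow> lin g p = lin h p"
  by (simp add: lin_def)

lemma lin_lin: "lin g (lin f p) = lin (\<lambda>a. lin g (f a)) p"
  by (simp add: lin_def[of _ p] lin_sum lin_scale)

lemma lin_id: "lin (\<lambda>a. Poly_Mapping.single a 1) p = p"
proof (rule poly_mapping_eqI)
  fix k
  show "Poly_Mapping.lookup (lin (\<lambda>a. Poly_Mapping.single a 1) p) k = Poly_Mapping.lookup p k"
    by (simp add: lin_def lookup_sum scale_single lookup_single when_def in_keys_iff)
qed

definition is_lin :: "(('a \<Rightarrow>\<^sub>0 complex) \<Rightarrow> ('b \<Rightarrow>\<^sub>0 complex)) \<Rightarrow> bool" where
  "is_lin F \<longleftrightarrow> (\<forall>p q. F (p + q) = F p + F q) \<and> (\<forall>c p. F (scale c p) = scale c (F p))"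

lemma is_linD:
  assumes "is_lin F"
  shows "F (p + q) = F p + F q" "F (scale c p) = scale c (F p)" "F 0 = 0"
    "F (- p) = - F p" "F (p - q) = F p - F q" "F (sum f I) = (\<Sum>i\<in>I. F (f i))"
proof -
  show a: "F (p + q) = F p + F q" for p q using assms by (simp add: is_lin_def)
  show s: "F (scale c p) = scale c (F p)" for c p using assms by (simp add: is_lin_def)
  show z: "F 0 = 0" using s[of 0 0] by simp
  show u: "F (- p) = - F p" for p using s[of "-1" p] by (simp add: scale_m1)
  show "F (p - q) = F p - F q" using a[of p "-q"] u[of q] by simp
  show "F (sum f I) = (\<Sum>i\<in>I. F (f i))"
    by (induction I rule: infinite_finite_induct) (auto simp: z a)
qed

lemma is_lin_lin: "is_lin (lin g)"
  by (simp add: is_lin_def lin_add lin_scale)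

lemma is_lin_comp: "is_lin F \<Longrightarrow> is_lin G \<Longrightarrow> is_lin (\<lambda>p. F (G p))"
  by (simp add: is_lin_def)

lemma is_lin_add: "is_lin F \<Longrightarrow> is_lin G \<Longrightarrow> is_lin (\<lambda>p. F p + G p)"
  by (simp add: is_lin_def scale_add_r algebra_simps)

lemma is_lin_diff: "is_lin F \<Longrightarrow> is_lin G \<Longrightarrow> is_lin (\<lambda>p. F p - G p)"
  by (simp add: is_lin_def scale_minus_r algebra_simps)

lemma is_lin_sum: "(\<And>i. i \<in> I \<Longrightarrow> is_lin (F i)) \<Longrightarrow> is_lin (\<lambda>p. \<Sum>i\<in>I. F i p)"
  by (simp add: is_lin_def scale_sum sum.distrib)

lemma is_lin_expand: "is_lin F \<Longrightarrow> F p = lin (\<lambda>w. F (Poly_Mapping.single w 1)) p"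
proof -
  assume F: "is_lin F"
  have "F p = F (lin (\<lambda>a. Poly_Mapping.single a 1) p)" by (simp add: lin_id)
  also have "\<dots> = lin (\<lambda>w. F (Poly_Mapping.single w 1)) p"
    unfolding lin_def by (simp add: is_linD[OF F])
  finally show ?thesis .
qed

definition bil :: "('a \<Rightarrow> 'b \<Rightarrow> 'c) \<Rightarrow> ('a \<Rightarrow>\<^sub>0 complex) \<Rightarrow> ('b \<Rightarrow>\<^sub>0 complex) \<Rightarrow> ('c \<Rightarrow>\<^sub>0 complex)" where
  "bil h p q = lin (\<lambda>u. lin (\<lambda>v. Poly_Mapping.single (h u v) 1) q) p"

lemma bil_eq: "(\<Sum>a\<in>Poly_Mapping.keys p. \<Sum>b\<in>Poly_Mapping.keys q.
       Poly_Mapping.single (h a b) (Poly_Mapping.lookup p a * Poly_Mapping.lookup q b)) = bil h p q"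
  unfolding bil_def lin_def by (simp add: scale_sum scale_single scale_scale)

lemma is_lin_bil1: "is_lin (\<lambda>p. bil h p q)"
  unfolding bil_def by (rule is_lin_lin)

lemma is_lin_bil2: "is_lin (\<lambda>q. bil h p q)"
  unfolding bil_def is_lin_def by (simp add: lin_add lin_scale lin_gadd lin_gscale)

lemma bil_single: "bil h (Poly_Mapping.single a c) (Poly_Mapping.single b d) = Poly_Mapping.single (h a b) (c * d)"
  unfolding bil_def by (simp add: lin_single scale_single mult.commute)

lemmas bil1 = is_linD[OF is_lin_bil1]
lemmas bil2 = is_linD[OF is_lin_bil2]

lemma fmul_bil: "fmul = bil (@)"
  by (intro ext) (simp add: fmul_def bil_eq)
lemma tens_bil: "tens = bil Pair"
  by (intro ext) (simp add: tens_def bil_eq)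
lemma mul2_bil: "mul2 = bil (\<lambda>a b. (fst a @ fst b, snd a @ snd b))"
  by (intro ext) (simp add: mul2_def bil_eq)
lemma flip2_lin: "flip2 = lin (\<lambda>a. Poly_Mapping.single (snd a, fst a) 1)"
  by (intro ext) (simp add: flip2_def lin_def scale_single)
lemma lin2_lin: "lin2 = lin"
  by (intro ext) (simp add: lin2_def lin_def)

lemma bil_assoc: "bil (@) (bil (@) p q) r = bil (@) p (bil (@) q r)"
  unfolding bil_def by (simp only: lin_lin lin_single scale_1 append_assoc)



lemma lin_swap: "lin (\<lambda>s. lin (\<lambda>v. F s v) b) c = lin (\<lambda>v. lin (\<lambda>s. F s v) c) b"
  unfolding lin_def by (simp add: scale_sum scale_scale mult.commute) (rule sum.swap)

lemma keys_fmul: "Poly_Mapping.keys (fmul p q) \<subseteq> {u @ v | u v. u \<in> Poly_Mapping.keys p \<and> v \<in> Poly_Mapping.keys q}"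
proof
  fix w assume w: "w \<in> Poly_Mapping.keys (fmul p q)"
  obtain u where u: "u \<in> Poly_Mapping.keys p" and
    w1: "w \<in> Poly_Mapping.keys (\<Sum>v\<in>Poly_Mapping.keys q.
       Poly_Mapping.single (u @ v) (Poly_Mapping.lookup p u * Poly_Mapping.lookup q v))"
    using subsetD[OF keys_sum w[unfolded fmul_def]] by (rule UN_E)
  obtain v where v: "v \<in> Poly_Mapping.keys q" and "w \<in> Poly_Mapping.keys (Poly_Mapping.single (u @ v) (Poly_Mapping.lookup p u * Poly_Mapping.lookup q v))"
    using subsetD[OF keys_sum w1] by (rule UN_E)
  then have "w = u @ v" by (simp split: if_splits)
  then show "w \<in> {u @ v | u v. u \<in> Poly_Mapping.keys p \<and> v \<in> Poly_Mapping.keys q}"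
    using u v by blast
qed

lemma alg_scale: "p \<in> alg n m \<Longrightarrow> scale c p \<in> alg n m"
  unfolding alg_def using keys_scale[of c p] by auto
lemma alg_mono: "set w \<subseteq> letters n m \<Longrightarrow> mono w \<in> alg n m"
  unfolding alg_def mono_def by simp
lemma alg_fmul: "p \<in> alg n m \<Longrightarrow> q \<in> alg n m \<Longrightarrow> fmul p q \<in> alg n m"
  unfolding alg_def using keys_fmul[of p q] by fastforce
lemma one_alg: "one_fa \<in> alg n m" by (simp add: one_fa_def alg_mono)
lemma Xv_alg: "i < n \<Longrightarrow> Xv i \<in> alg n m" by (simp add: Xv_def alg_mono letters_def)
lemma Yv_alg: "j < m \<Longrightarrow> Yv j \<in> alg n m" by (simp add: Yv_def alg_mono letters_def)

lemma cideal_scale: "x \<in> cideal n m \<Longrightarrow> scale c x \<in> cideal n m"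
proof (induction rule: cideal.induct)
  case zero then show ?case by (simp add: cideal.zero)
next
  case (add p q) then show ?case by (simp add: scale_add_r cideal.add)
next
  case (gen g a b)
  have "scale c (fmul (fmul a g) b) = fmul (fmul (scale c a) g) b"
    by (simp add: fmul_bil bil1)
  then show ?case using gen by (simp add: cideal.gen alg_scale)
qed

lemma cideal_uminus: "x \<in> cideal n m \<Longrightarrow> - x \<in> cideal n m"
  using cideal_scale[of x n m "-1"] by (simp add: scale_m1)
lemma cideal_diff: "x \<in> cideal n m \<Longrightarrow> y \<in> cideal n m \<Longrightarrow> x - y \<in> cideal n m"
  using cideal.add[OF _ cideal_uminus, of x n m y] by simp

lemma cideal_fmul_right: "x \<in> cideal n m \<Longrightarrow> c \<in> alg n m \<Longrightarrow> fmul x c \<in> cideal n m"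
proof (induction rule: cideal.induct)
  case zero then show ?case by (simp add: fmul_bil bil1 cideal.zero)
next
  case (add p q) then show ?case by (simp add: fmul_bil bil1 cideal.add)
next
  case (gen g a b)
  have "fmul (fmul (fmul a g) b) c = fmul (fmul a g) (fmul b c)"
    by (simp add: fmul_bil bil_assoc)
  then show ?case using gen by (simp add: cideal.gen alg_fmul)
qed

lemma cideal_fmul_left: "x \<in> cideal n m \<Longrightarrow> c \<in> alg n m \<Longrightarrow> fmul c x \<in> cideal n m"
proof (induction rule: cideal.induct)
  case zero then show ?case by (simp add: fmul_bil bil2 cideal.zero)
next
  case (add p q) then show ?case by (simp add: fmul_bil bil2 cideal.add)
next
  case (gen g a b)
  have "fmul c (fmul (fmul a g) b) = fmul (fmul (fmul c a) g) b"
    by (simp add: fmul_bil bil_assoc)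
  then show ?case using gen by (simp add: cideal.gen alg_fmul)
qed

lemma mul2_tens: "mul2 (tens a b) (tens c d) = tens (fmul a c) (fmul b d)"
  unfolding mul2_bil tens_bil fmul_bil bil_def
  apply (simp only: lin_lin lin_single scale_1 fst_conv snd_conv)
  apply (rule lin_cong)
  apply (rule lin_swap)
  done

lemma flip2_tens: "flip2 (tens a b) = tens b a"
  unfolding flip2_lin tens_bil bil_def
  apply (simp only: lin_lin lin_single scale_1 fst_conv snd_conv)
  apply (rule lin_swap)
  done

lemma ker2_scale: "k \<in> ker2 n m \<Longrightarrow> scale c k \<in> ker2 n m"
proof (induction rule: ker2.induct)
  case zero then show ?case by (simp add: ker2.zero)
next
  case (add p q) then show ?case by (simp add: scale_add_r ker2.add)
next
  case (left a b)
  have "scale c (tens a b) = tens (scale c a) b" by (simp add: tens_bil bil1)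
  then show ?case using left by (simp add: ker2.left cideal_scale)
next
  case (right a b)
  have "scale c (tens a b) = tens (scale c a) b" by (simp add: tens_bil bil1)
  then show ?case using right by (simp add: ker2.right alg_scale)
qed

lemma ker2_uminus: "x \<in> ker2 n m \<Longrightarrow> - x \<in> ker2 n m"
  using ker2_scale[of x n m "-1"] by (simp add: scale_m1)
lemma ker2_diff: "x \<in> ker2 n m \<Longrightarrow> y \<in> ker2 n m \<Longrightarrow> x - y \<in> ker2 n m"
  using ker2.add[OF _ ker2_uminus, of x n m y] by simp
lemma ker2_sum: "(\<And>i. i \<in> I \<Longrightarrow> f i \<in> ker2 n m) \<Longrightarrow> sum f I \<in> ker2 n m"
  by (induction I rule: infinite_finite_induct) (auto intro: ker2.zero ker2.add)

lemma ker2_mul_right: "k \<in> ker2 n m \<Longrightarrow> a \<in> alg n m \<Longrightarrow> b \<in> alg n m \<Longrightarrow> mul2 k (tens a b) \<in> ker2 n m"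
proof (induction rule: ker2.induct)
  case zero then show ?case by (simp add: mul2_bil bil1 ker2.zero)
next
  case (add p q) then show ?case by (simp add: mul2_bil bil1 ker2.add)
next
  case (left c d) then show ?case
    by (simp add: mul2_tens ker2.left cideal_fmul_right alg_fmul)
next
  case (right c d) then show ?case
    by (simp add: mul2_tens ker2.right cideal_fmul_right alg_fmul)
qed

lemma ker2_mul_left: "k \<in> ker2 n m \<Longrightarrow> a \<in> alg n m \<Longrightarrow> b \<in> alg n m \<Longrightarrow> mul2 (tens a b) k \<in> ker2 n m"
proof (induction rule: ker2.induct)
  case zero then show ?case by (simp add: mul2_bil bil2 ker2.zero)
next
  case (add p q) then show ?case by (simp add: mul2_bil bil2 ker2.add)
next
  case (left c d) then show ?case
    by (simp add: mul2_tens ker2.left cideal_fmul_left alg_fmul)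
next
  case (right c d) then show ?case
    by (simp add: mul2_tens ker2.right cideal_fmul_left alg_fmul)
qed

lemma ker2_flip: "k \<in> ker2 n m \<Longrightarrow> flip2 k \<in> ker2 n m"
proof (induction rule: ker2.induct)
  case zero then show ?case by (simp add: flip2_lin ker2.zero)
next
  case (add p q) then show ?case by (simp add: flip2_lin lin_add ker2.add)
next
  case (left c d) then show ?case
    by (simp add: flip2_tens ker2.right)
next
  case (right c d) then show ?case
    by (simp add: flip2_tens ker2.left)
qed

lemma swap_gen:
  assumes "i < n" "j < m" "set u \<subseteq> letters n m" "set v \<subseteq> letters n m"
  shows "mono (u @ [Inl i, Inr j] @ v) - mono (u @ [Inr j, Inl i] @ v) \<in> cideal n m"
proof -
  have "fmul (fmul (mono u) (mono [Inl i, Inr j] - mono [Inr j, Inl i])) (mono v) \<in> cideal n m"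
    using assms by (intro cideal.gen alg_mono) (auto simp: comm_gens_def)
  moreover have "fmul (fmul (mono u) (mono [Inl i, Inr j] - mono [Inr j, Inl i])) (mono v)
     = mono (u @ [Inl i, Inr j] @ v) - mono (u @ [Inr j, Inl i] @ v)"
    by (simp add: mono_def fmul_bil bil1 bil2 bil_single)
  ultimately show ?thesis by simp
qed

lemma move_y:
  assumes "set u \<subseteq> letters n m" "set v \<subseteq> letters n m" "set xs \<subseteq> letters n m"
    "\<forall>x\<in>set xs. isl x" "y \<in> letters n m" "\<not> isl y"
  shows "mono (u @ y # xs @ v) - mono (u @ xs @ y # v) \<in> cideal n m"
  using assms
proof (induction xs arbitrary: u)
  case Nil then show ?case by (simp add: cideal.zero)
next
  case (Cons x xs)
  obtain i where i: "x = Inl i" "i < n" using Cons.prems(3,4) by (auto simp: letters_def)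
  obtain j where j: "y = Inr j" "j < m" using Cons.prems(5,6) by (auto simp: letters_def)
  have 1: "mono (u @ [Inl i, Inr j] @ (xs @ v)) - mono (u @ [Inr j, Inl i] @ (xs @ v)) \<in> cideal n m"
    using Cons.prems by (intro swap_gen i j) auto
  have 2: "mono ((u @ [x]) @ y # xs @ v) - mono ((u @ [x]) @ xs @ y # v) \<in> cideal n m"
    using Cons.prems by (intro Cons.IH) auto
  have "mono (u @ y # (x # xs) @ v) - mono (u @ (x # xs) @ y # v)
      = - (mono (u @ [Inl i, Inr j] @ (xs @ v)) - mono (u @ [Inr j, Inl i] @ (xs @ v)))
        + (mono ((u @ [x]) @ y # xs @ v) - mono ((u @ [x]) @ xs @ y # v))"
    using i j by simp
  then show ?case using 1 2 by (simp only: cideal.add cideal_uminus)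
qed

definition nf :: "word \<Rightarrow> word" where
  "nf w = filter isl w @ filter (\<lambda>z. \<not> isl z) w"

lemma set_nf [simp]: "set (nf w) = set w"
  by (auto simp: nf_def)

lemma mono_nf:
  assumes "set u \<subseteq> letters n m" "set v \<subseteq> letters n m" "set w \<subseteq> letters n m"
  shows "mono (u @ w @ v) - mono (u @ nf w @ v) \<in> cideal n m"
  using assms
proof (induction w arbitrary: u)
  case Nil then show ?case by (simp add: nf_def cideal.zero)
next
  case (Cons a w)
  have IH: "mono ((u @ [a]) @ w @ v) - mono ((u @ [a]) @ nf w @ v) \<in> cideal n m"
    using Cons.prems by (intro Cons.IH) auto
  show ?case
  proof (cases "isl a")
    case True
    then show ?thesis using IH by (simp add: nf_def)
  next
    case False
    have M: "mono (u @ a # filter isl w @ (filter (\<lambda>z. \<not> isl z) w @ v))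
         - mono (u @ filter isl w @ a # (filter (\<lambda>z. \<not> isl z) w @ v)) \<in> cideal n m"
      using Cons.prems False by (intro move_y) auto
    have "mono (u @ (a # w) @ v) - mono (u @ nf (a # w) @ v)
       = (mono ((u @ [a]) @ w @ v) - mono ((u @ [a]) @ nf w @ v))
         + (mono (u @ a # filter isl w @ (filter (\<lambda>z. \<not> isl z) w @ v))
         - mono (u @ filter isl w @ a # (filter (\<lambda>z. \<not> isl z) w @ v)))"
      using False by (simp add: nf_def)
    then show ?thesis using IH M by (simp only: cideal.add)
  qed
qed

lemma tens_mono: "tens (mono a) (mono b) = Poly_Mapping.single (a, b) 1"
  by (simp add: tens_bil mono_def bil_single)

lemma single_nf:
  assumes "set a \<subseteq> letters n m" "set b \<subseteq> letters n m"
  shows "Poly_Mapping.single (a, b) 1 - Poly_Mapping.single (nf a, nf b) 1 \<in> ker2 n m"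
proof -
  have A: "mono a - mono (nf a) \<in> cideal n m" using mono_nf[of "[]" n m "[]" a] assms by simp
  have B: "mono b - mono (nf b) \<in> cideal n m" using mono_nf[of "[]" n m "[]" b] assms by simp
  have "Poly_Mapping.single (a, b) 1 - Poly_Mapping.single (nf a, nf b) 1
     = tens (mono a - mono (nf a)) (mono b) + tens (mono (nf a)) (mono b - mono (nf b))"
    by (simp add: tens_bil bil1 bil2 mono_def bil_single)
  then show ?thesis using A B assms
    by (simp add: ker2.add ker2.left ker2.right alg_mono)
qed

lemma diff3: "(x::'a::ab_group_add) - y = (x - z) - (y - z)" by simp

lemma single_equiv:
  assumes "set a \<subseteq> letters n m" "set b \<subseteq> letters n m" "set a' \<subseteq> letters n m" "set b' \<subseteq> letters n m"
    "nf a = nf a'" "nf b = nf b'"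
  shows "Poly_Mapping.single (a, b) 1 - Poly_Mapping.single (a', b') 1 \<in> ker2 n m"
proof -
  have eq: "Poly_Mapping.single (a, b) 1 - Poly_Mapping.single (a', b') 1
     = (Poly_Mapping.single (a, b) (1::complex) - Poly_Mapping.single (nf a, nf b) 1)
      - (Poly_Mapping.single (a', b') 1 - Poly_Mapping.single (nf a', nf b') 1)"
    unfolding assms(5,6) by (rule diff3)
  show ?thesis unfolding eq using assms by (intro ker2_diff single_nf) auto
qed



abbreviation xs :: "word \<Rightarrow> word" where "xs w \<equiv> filter isl w"
abbreviation ys :: "word \<Rightarrow> word" where "ys w \<equiv> filter (\<lambda>z. \<not> isl z) w"

lemma dq_sum: "dq_word S a w = (\<Sum>q<length w. if w ! q = a then
   Poly_Mapping.single (take q w @ filter (\<lambda>z. \<not> S z) (drop (Suc q) w), filter S (drop (Suc q) w)) 1 else 0)"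
proof -
  have "{q. q < length w \<and> w ! q = a} = {q \<in> {..<length w}. w ! q = a}" by auto
  then show ?thesis unfolding dq_word_def by (simp only:) (rule sum.inter_filter, simp)
qed

lemma lin_if: "is_lin F \<Longrightarrow> F (if c then x else 0) = (if c then F x else 0)"
  by (cases c) (simp_all add: is_linD)

lemma mul2_single: "mul2 (Poly_Mapping.single a 1) (Poly_Mapping.single b 1)
   = Poly_Mapping.single (fst a @ fst b, snd a @ snd b) 1"
  by (simp add: mul2_bil bil_single)

lemma tens_mono': "tens (mono a) (mono b) = Poly_Mapping.single (a, b) 1"
  by (rule tens_mono)

definition HX :: "word \<Rightarrow> nat \<Rightarrow> fa2" where
  "HX w q = Poly_Mapping.single (take q w @ ys (drop (Suc q) w) @ [w ! q], xs (drop (Suc q) w)) 1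
          - Poly_Mapping.single (take q w @ ys (drop (Suc q) w), w ! q # xs (drop (Suc q) w)) 1"

definition HY :: "word \<Rightarrow> nat \<Rightarrow> fa2" where
  "HY w q = Poly_Mapping.single (take q w @ xs (drop (Suc q) w) @ [w ! q], ys (drop (Suc q) w)) 1
          - Poly_Mapping.single (take q w @ xs (drop (Suc q) w), w ! q # ys (drop (Suc q) w)) 1"

lemma XS_eq:
  assumes "set w \<subseteq> letters n m"
  shows "(\<Sum>i<n. mul2 (dL i (mono w)) (tens (Xv i) one_fa) - mul2 (tens one_fa (Xv i)) (dL i (mono w)))
     = (\<Sum>q<length w. if isl (w ! q) then HX w q else 0)"
proof -
  have per_i: "mul2 (dL i (mono w)) (tens (Xv i) one_fa) - mul2 (tens one_fa (Xv i)) (dL i (mono w))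
      = (\<Sum>q<length w. if w ! q = Inl i then HX w q else 0)" for i
  proof -
    have "mul2 (dL i (mono w)) (tens (Xv i) one_fa) - mul2 (tens one_fa (Xv i)) (dL i (mono w))
      = (\<Sum>q<length w. (if w ! q = Inl i then
          Poly_Mapping.single (take q w @ ys (drop (Suc q) w) @ [Inl i], xs (drop (Suc q) w)) 1 else 0)
        - (if w ! q = Inl i then Poly_Mapping.single (take q w @ ys (drop (Suc q) w), Inl i # xs (drop (Suc q) w)) 1 else 0))"
      unfolding dL_def lin2_lin mono_def lin_single scale_1 dq_sum Xv_def one_fa_def tens_mono
      by (simp add: sum_subtractf bil1 bil2 mul2_bil tens_bil lin_if[OF is_lin_bil1] lin_if[OF is_lin_bil2] bil_single cong: if_cong)
    also have "\<dots> = (\<Sum>q<length w. if w ! q = Inl i then HX w q else 0)"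
      by (rule sum.cong) (auto simp: HX_def)
    finally show ?thesis .
  qed
  have "(\<Sum>i<n. \<Sum>q<length w. if w ! q = Inl i then HX w q else 0)
      = (\<Sum>q<length w. \<Sum>i<n. if w ! q = Inl i then HX w q else 0)"
    by (rule sum.swap)
  also have "\<dots> = (\<Sum>q<length w. if isl (w ! q) then HX w q else 0)"
  proof (rule sum.cong)
    fix q assume "q \<in> {..<length w}"
    then have "w ! q \<in> letters n m" using assms nth_mem by blast
    then show "(\<Sum>i<n. if w ! q = Inl i then HX w q else 0) = (if isl (w ! q) then HX w q else 0)"
      by (auto simp: letters_def)
  qed simp
  finally show ?thesis by (simp add: per_i)
qed

lemma YS_eq:
  assumes "set w \<subseteq> letters n m"
  shows "(\<Sum>j<m. mul2 (dR j (mono w)) (tens (Yv j) one_fa) - mul2 (tens one_fa (Yv j)) (dR j (mono w)))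
     = (\<Sum>q<length w. if \<not> isl (w ! q) then HY w q else 0)"
proof -
  have per_j: "mul2 (dR j (mono w)) (tens (Yv j) one_fa) - mul2 (tens one_fa (Yv j)) (dR j (mono w))
      = (\<Sum>q<length w. if w ! q = Inr j then HY w q else 0)" for j
  proof -
    have "mul2 (dR j (mono w)) (tens (Yv j) one_fa) - mul2 (tens one_fa (Yv j)) (dR j (mono w))
      = (\<Sum>q<length w. (if w ! q = Inr j then
          Poly_Mapping.single (take q w @ xs (drop (Suc q) w) @ [Inr j], ys (drop (Suc q) w)) 1 else 0)
        - (if w ! q = Inr j then Poly_Mapping.single (take q w @ xs (drop (Suc q) w), Inr j # ys (drop (Suc q) w)) 1 else 0))"
      unfolding dR_def lin2_lin mono_def lin_single scale_1 dq_sum Yv_def one_fa_def tens_mono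
      by (simp add: sum_subtractf bil1 bil2 mul2_bil tens_bil lin_if[OF is_lin_bil1] lin_if[OF is_lin_bil2] bil_single cong: if_cong)
    also have "\<dots> = (\<Sum>q<length w. if w ! q = Inr j then HY w q else 0)"
      by (rule sum.cong) (auto simp: HY_def)
    finally show ?thesis .
  qed
  have "(\<Sum>j<m. \<Sum>q<length w. if w ! q = Inr j then HY w q else 0)
      = (\<Sum>q<length w. \<Sum>j<m. if w ! q = Inr j then HY w q else 0)"
    by (rule sum.swap)
  also have "\<dots> = (\<Sum>q<length w. if \<not> isl (w ! q) then HY w q else 0)"
  proof (rule sum.cong)
    fix q assume "q \<in> {..<length w}"
    then have "w ! q \<in> letters n m" using assms nth_mem by blast
    then show "(\<Sum>j<m. if w ! q = Inr j then HY w q else 0) = (if \<not> isl (w ! q) then HY w q else 0)"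
      by (auto simp: letters_def)
  qed simp
  finally show ?thesis by (simp add: per_j)
qed

lemma flip_single: "flip2 (Poly_Mapping.single (a, b) 1) = Poly_Mapping.single (b, a) 1"
  by (simp add: flip2_lin lin_single)

lemma flip2_minus: "flip2 (p - q) = flip2 p - flip2 q"
  by (simp add: flip2_lin lin_minus)

lemma flip_YS: "flip2 (\<Sum>q<length w. if \<not> isl (w ! q) then HY w q else 0)
   = (\<Sum>q<length w. if \<not> isl (w ! q) then flip2 (HY w q) else 0)"
  unfolding flip2_lin by (simp add: is_linD[OF is_lin_lin] lin_if[OF is_lin_lin])

lemma diff4: "((a::'a::ab_group_add) - b) - (c - d) = (a - c) - (b - d)" by simp

definition gX :: "word \<Rightarrow> nat \<Rightarrow> fa2" where
  "gX w k = Poly_Mapping.single (xs (take k w) @ ys w, xs (drop k w)) 1"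
definition gY :: "word \<Rightarrow> nat \<Rightarrow> fa2" where
  "gY w k = Poly_Mapping.single (ys (drop k w), xs w @ ys (take k w)) 1"

lemma X_q:
  assumes "set (u @ x # v) \<subseteq> letters n m"
  shows "(if isl x then HX (u @ x # v) (length u) else 0)
     - (gX (u @ x # v) (Suc (length u)) - gX (u @ x # v) (length u)) \<in> ker2 n m"
proof (cases "isl x")
  case True
  have "HX (u @ x # v) (length u) - (gX (u @ x # v) (Suc (length u)) - gX (u @ x # v) (length u))
    = (Poly_Mapping.single (u @ ys v @ [x], xs v) 1 - Poly_Mapping.single (xs (u @ [x]) @ ys (u @ x # v), xs v) 1)
     - (Poly_Mapping.single (u @ ys v, x # xs v) 1 - Poly_Mapping.single (xs u @ ys (u @ x # v), xs (x # v)) 1)"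
    unfolding HX_def gX_def by (simp add: nth_append algebra_simps)
  moreover have "\<dots> \<in> ker2 n m"
    using assms True by (intro ker2_diff single_equiv) (auto simp: nf_def)
  ultimately show ?thesis using True by simp
next
  case False
  then show ?thesis by (simp add: gX_def ker2.zero)
qed

lemma Y_q:
  assumes "set (u @ x # v) \<subseteq> letters n m"
  shows "(if \<not> isl x then flip2 (HY (u @ x # v) (length u)) else 0)
     - (gY (u @ x # v) (Suc (length u)) - gY (u @ x # v) (length u)) \<in> ker2 n m"
proof (cases "isl x")
  case False
  have "flip2 (HY (u @ x # v) (length u)) - (gY (u @ x # v) (Suc (length u)) - gY (u @ x # v) (length u))
    = (Poly_Mapping.single (ys v, u @ xs v @ [x]) 1 - Poly_Mapping.single (ys v, xs (u @ x # v) @ ys (u @ [x])) 1)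
     - (Poly_Mapping.single (x # ys v, u @ xs v) 1 - Poly_Mapping.single (ys (x # v), xs (u @ x # v) @ ys u) 1)"
    unfolding HY_def gY_def by (simp add: nth_append flip2_minus flip_single algebra_simps)
  moreover have "\<dots> \<in> ker2 n m"
    using assms False by (intro ker2_diff single_equiv) (auto simp: nf_def)
  ultimately show ?thesis using False by simp
next
  case True
  then show ?thesis by (simp add: gY_def ker2.zero)
qed

lemma split_at:
  assumes "q < length w"
  obtains u x v where "w = u @ x # v" "q = length u"
proof (rule that[of "take q w" "w ! q" "drop (Suc q) w"])
  show "w = take q w @ w ! q # drop (Suc q) w" by (rule id_take_nth_drop[OF assms])
  show "q = length (take q w)" using assms by simp
qed

lemma XS_ker:
  assumes "set w \<subseteq> letters n m"
  shows "(\<Sum>q<length w. if isl (w ! q) then HX w q else 0) - (gX w (length w) - gX w 0) \<in> ker2 n m"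
proof -
  have "(\<Sum>q<length w. if isl (w ! q) then HX w q else 0) - (gX w (length w) - gX w 0)
     = (\<Sum>q<length w. (if isl (w ! q) then HX w q else 0) - (gX w (Suc q) - gX w q))"
    by (subst sum_subtractf) (simp only: sum_lessThan_telescope)
  moreover have "\<dots> \<in> ker2 n m"
  proof (rule ker2_sum)
    fix q assume "q \<in> {..<length w}"
    then obtain u x v where w: "w = u @ x # v" and q: "q = length u" using split_at by blast
    have nth: "w ! q = x" using w q by simp
    have "set (u @ x # v) \<subseteq> letters n m" using assms w by simp
    from X_q[OF this] have Q: "(if isl (x) then HX w q else 0) - (gX w (Suc q) - gX w q) \<in> ker2 n m"
      by (simp only: w[symmetric] q[symmetric])
    show "(if isl (w ! q) then HX w q else 0) - (gX w (Suc q) - gX w q) \<in> ker2 n m"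
      unfolding nth by (rule Q)
  qed
  ultimately show ?thesis by simp
qed

lemma YS_ker:
  assumes "set w \<subseteq> letters n m"
  shows "(\<Sum>q<length w. if \<not> isl (w ! q) then flip2 (HY w q) else 0) - (gY w (length w) - gY w 0) \<in> ker2 n m"
proof -
  have "(\<Sum>q<length w. if \<not> isl (w ! q) then flip2 (HY w q) else 0) - (gY w (length w) - gY w 0)
     = (\<Sum>q<length w. (if \<not> isl (w ! q) then flip2 (HY w q) else 0) - (gY w (Suc q) - gY w q))"
    by (subst sum_subtractf) (simp only: sum_lessThan_telescope)
  moreover have "\<dots> \<in> ker2 n m"
  proof (rule ker2_sum)
    fix q assume "q \<in> {..<length w}"
    then obtain u x v where w: "w = u @ x # v" and q: "q = length u" using split_at by blast
    have nth: "w ! q = x" using w q by simp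
    have "set (u @ x # v) \<subseteq> letters n m" using assms w by simp
    from Y_q[OF this] have Q: "(if \<not> isl (x) then flip2 (HY w q) else 0) - (gY w (Suc q) - gY w q) \<in> ker2 n m"
      by (simp only: w[symmetric] q[symmetric])
    show "(if \<not> isl (w ! q) then flip2 (HY w q) else 0) - (gY w (Suc q) - gY w q) \<in> ker2 n m"
      unfolding nth by (rule Q)
  qed
  ultimately show ?thesis by simp
qed

lemma regroup: "(X::'a::ab_group_add) - FY - (P1 - P2) = (X - (GXl - Gz)) - (FY - (GYl - Gz)) + ((P2 - GYl) - (P1 - GXl))"
  by (simp add: algebra_simps)

lemma E_mono:
  assumes "set w \<subseteq> letters n m"
  shows "((\<Sum>i<n. mul2 (dL i (mono w)) (tens (Xv i) one_fa) - mul2 (tens one_fa (Xv i)) (dL i (mono w)))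
          - flip2 (\<Sum>j<m. mul2 (dR j (mono w)) (tens (Yv j) one_fa) - mul2 (tens one_fa (Yv j)) (dR j (mono w)))
          - (tens (mono w) one_fa - tens one_fa (mono w))) \<in> ker2 n m"
proof -
  have g0: "gY w 0 = gX w 0" by (simp add: gX_def gY_def)
  have P1: "tens (mono w) one_fa - gX w (length w) \<in> ker2 n m"
    unfolding one_fa_def tens_mono gX_def using assms by (intro single_equiv) (auto simp: nf_def)
  have P2: "tens one_fa (mono w) - gY w (length w) \<in> ker2 n m"
    unfolding one_fa_def tens_mono gY_def using assms by (intro single_equiv) (auto simp: nf_def)
  show ?thesis
    unfolding XS_eq[OF assms] YS_eq[OF assms] flip_YS
    apply (subst regroup[where GXl = "gX w (length w)" and GYl = "gY w (length w)" and Gz = "gX w 0"])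
    apply (rule ker2.add)
     apply (rule ker2_diff)
      apply (rule XS_ker[OF assms])
     apply (rule YS_ker[OF assms, unfolded g0])
    apply (rule ker2_diff[OF P2 P1])
    done
qed



definition EE :: "nat \<Rightarrow> nat \<Rightarrow> fa \<Rightarrow> fa2" where
  "EE n m P = ((\<Sum>i<n. mul2 (dL i P) (tens (Xv i) one_fa) - mul2 (tens one_fa (Xv i)) (dL i P))
          - flip2 (\<Sum>j<m. mul2 (dR j P) (tens (Yv j) one_fa) - mul2 (tens one_fa (Yv j)) (dR j P))
          - (tens P one_fa - tens one_fa P))"

lemma il_mul2_1: "is_lin (\<lambda>p. mul2 p c)" unfolding mul2_bil by (rule is_lin_bil1)
lemma il_mul2_2: "is_lin (\<lambda>p. mul2 c p)" unfolding mul2_bil by (rule is_lin_bil2)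
lemma il_tens_1: "is_lin (\<lambda>p. tens p c)" unfolding tens_bil by (rule is_lin_bil1)
lemma il_tens_2: "is_lin (\<lambda>p. tens c p)" unfolding tens_bil by (rule is_lin_bil2)
lemma il_flip: "is_lin flip2" unfolding flip2_lin by (rule is_lin_lin)
lemma il_dL: "is_lin (dL i)" unfolding dL_def lin2_lin by (rule is_lin_lin)
lemma il_dR: "is_lin (dR j)" unfolding dR_def lin2_lin by (rule is_lin_lin)

lemma is_lin_EE: "is_lin (EE n m)"
proof -
  have X: "is_lin (\<lambda>P. \<Sum>i<n. mul2 (dL i P) (tens (Xv i) one_fa) - mul2 (tens one_fa (Xv i)) (dL i P))"
  proof (rule is_lin_sum)
    fix i
    have 1: "is_lin (\<lambda>P. mul2 (dL i P) (tens (Xv i) one_fa))"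
      using is_lin_comp[OF il_mul2_1 il_dL] .
    have 2: "is_lin (\<lambda>P. mul2 (tens one_fa (Xv i)) (dL i P))"
      using is_lin_comp[OF il_mul2_2 il_dL] .
    show "is_lin (\<lambda>P. mul2 (dL i P) (tens (Xv i) one_fa) - mul2 (tens one_fa (Xv i)) (dL i P))"
      using is_lin_diff[OF 1 2] .
  qed
  have Y: "is_lin (\<lambda>P. \<Sum>j<m. mul2 (dR j P) (tens (Yv j) one_fa) - mul2 (tens one_fa (Yv j)) (dR j P))"
  proof (rule is_lin_sum)
    fix j
    have 1: "is_lin (\<lambda>P. mul2 (dR j P) (tens (Yv j) one_fa))"
      using is_lin_comp[OF il_mul2_1 il_dR] .
    have 2: "is_lin (\<lambda>P. mul2 (tens one_fa (Yv j)) (dR j P))"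
      using is_lin_comp[OF il_mul2_2 il_dR] .
    show "is_lin (\<lambda>P. mul2 (dR j P) (tens (Yv j) one_fa) - mul2 (tens one_fa (Yv j)) (dR j P))"
      using is_lin_diff[OF 1 2] .
  qed
  have FY: "is_lin (\<lambda>P. flip2 (\<Sum>j<m. mul2 (dR j P) (tens (Yv j) one_fa) - mul2 (tens one_fa (Yv j)) (dR j P)))"
    using is_lin_comp[OF il_flip Y] .
  have T: "is_lin (\<lambda>P. tens P one_fa - tens one_fa P)"
    using is_lin_diff[OF il_tens_1 il_tens_2] .
  show ?thesis
    unfolding EE_def using is_lin_diff[OF is_lin_diff[OF X FY] T] .
qed

lemma part1: "P \<in> alg n m \<Longrightarrow> EE n m P \<in> ker2 n m"
proof -
  assume P: "P \<in> alg n m"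
  have "EE n m P = lin (\<lambda>w. EE n m (Poly_Mapping.single w 1)) P"
    by (rule is_lin_expand[OF is_lin_EE])
  also have "\<dots> \<in> ker2 n m"
    unfolding lin_def
  proof (intro ker2_sum ker2_scale)
    fix w assume "w \<in> Poly_Mapping.keys P"
    then have "set w \<subseteq> letters n m" using P by (auto simp: alg_def)
    from E_mono[OF this] show "EE n m (Poly_Mapping.single w 1) \<in> ker2 n m"
      by (simp add: EE_def mono_def)
  qed
  finally show ?thesis .
qed

definition TT :: "fa2 \<Rightarrow> fa" where
  "TT = lin (\<lambda>ab. if snd ab = [] then mono (fst ab) else 0)"

lemma TT_tens: "TT (tens a b) = scale (Poly_Mapping.lookup b []) a"
proof -
  have inner: "lin (\<lambda>v. if v = [] then mono u else 0) b = scale (Poly_Mapping.lookup b []) (mono u)" for u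
  proof -
    have "lin (\<lambda>v. if v = [] then mono u else 0) b
        = (\<Sum>v\<in>Poly_Mapping.keys b. if v = [] then scale (Poly_Mapping.lookup b v) (mono u) else 0)"
      unfolding lin_def by (rule sum.cong) auto
    also have "\<dots> = scale (Poly_Mapping.lookup b []) (mono u)"
      by (simp add: in_keys_iff)
    finally show ?thesis .
  qed
  have "TT (tens a b) = lin (\<lambda>u. lin (\<lambda>v. if v = [] then mono u else 0) b) a"
    unfolding TT_def tens_bil bil_def by (simp only: lin_lin lin_single scale_1 fst_conv snd_conv)
  also have "\<dots> = lin (\<lambda>u. scale (Poly_Mapping.lookup b []) (Poly_Mapping.single u 1)) a"
    by (simp add: inner mono_def)
  also have "\<dots> = scale (Poly_Mapping.lookup b []) a"
    by (simp add: lin_gscale lin_id)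
  finally show ?thesis .
qed

lemma keys_diff: "Poly_Mapping.keys (p - q) \<subseteq> Poly_Mapping.keys p \<union> Poly_Mapping.keys q"
  by (auto simp: in_keys_iff lookup_minus)

lemma cideal_nil: "b \<in> cideal n m \<Longrightarrow> Poly_Mapping.lookup b [] = 0"
proof (induction rule: cideal.induct)
  case zero then show ?case by simp
next
  case (add p q) then show ?case by (simp add: lookup_add)
next
  case (gen g a b)
  have kg: "Poly_Mapping.keys g \<subseteq> {w. length w = 2}"
    using gen(1) keys_diff by (fastforce simp: comm_gens_def mono_def)
  have "[] \<notin> Poly_Mapping.keys (fmul (fmul a g) b)"
  proof
    assume "[] \<in> Poly_Mapping.keys (fmul (fmul a g) b)"
    then obtain u v where "[] = u @ v" "u \<in> Poly_Mapping.keys (fmul a g)" using keys_fmul by blast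
    then have "[] \<in> Poly_Mapping.keys (fmul a g)" by simp
    then obtain u' v' where "[] = u' @ v'" "v' \<in> Poly_Mapping.keys g" using keys_fmul by blast
    then show False using kg by auto
  qed
  then show ?case by (simp add: in_keys_iff)
qed

lemma TT_ker2: "k \<in> ker2 n m \<Longrightarrow> TT k \<in> cideal n m"
proof (induction rule: ker2.induct)
  case zero then show ?case by (simp add: TT_def cideal.zero)
next
  case (add p q) then show ?case by (simp add: TT_def lin_add cideal.add)
next
  case (left a b) then show ?case by (simp add: TT_tens cideal_scale)
next
  case (right a b) then show ?case by (simp add: TT_tens cideal_nil cideal.zero)
qed

lemma TTm: "TT (p - q) = TT p - TT q" by (simp add: TT_def lin_minus)

lemma diff5: "(x::'a::ab_group_add) - y - (x - y - z) = z" by simp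

lemma part2:
  assumes P: "P \<in> alg n m" and L: "\<forall>i<n. dL i P \<in> ker2 n m" and R: "\<forall>j<m. dR j P \<in> ker2 n m"
  shows "\<exists>c. P - scale c one_fa \<in> cideal n m"
proof -
  have SX: "(\<Sum>i<n. mul2 (dL i P) (tens (Xv i) one_fa) - mul2 (tens one_fa (Xv i)) (dL i P)) \<in> ker2 n m"
    using L by (intro ker2_sum ker2_diff ker2_mul_right ker2_mul_left Xv_alg one_alg) auto
  have SY: "flip2 (\<Sum>j<m. mul2 (dR j P) (tens (Yv j) one_fa) - mul2 (tens one_fa (Yv j)) (dR j P)) \<in> ker2 n m"
    using R by (intro ker2_flip ker2_sum ker2_diff ker2_mul_right ker2_mul_left Yv_alg one_alg) auto
  have "tens P one_fa - tens one_fa P \<in> ker2 n m"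
    using ker2_diff[OF ker2_diff[OF SX SY] part1[OF P]] unfolding EE_def diff5 .
  then have "TT (tens P one_fa - tens one_fa P) \<in> cideal n m" by (rule TT_ker2)
  then have "P - scale (Poly_Mapping.lookup P []) one_fa \<in> cideal n m"
    using TTm[of "tens P one_fa" "tens one_fa P"] by (simp add: TT_tens one_fa_def mono_def)
  then show ?thesis by blast
qed

theorem proposition2p13:
  fixes n m :: nat and P :: fa
  assumes "P \<in> alg n m"
  shows "((\<Sum>i<n. mul2 (dL i P) (tens (Xv i) one_fa) - mul2 (tens one_fa (Xv i)) (dL i P))
          - flip2 (\<Sum>j<m. mul2 (dR j P) (tens (Yv j) one_fa) - mul2 (tens one_fa (Yv j)) (dR j P))
          - (tens P one_fa - tens one_fa P)) \<in> ker2 n m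
       \<and> (((\<forall>i<n. dL i P \<in> ker2 n m) \<and> (\<forall>j<m. dR j P \<in> ker2 n m))
            \<longrightarrow> (\<exists>c. P - scale c one_fa \<in> cideal n m))"
  using part1[OF assms, unfolded EE_def] part2[OF assms] by blast


end
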